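(* Let $n\ge 1$ and let $f(x)=x^n+\sum_{i=1}^{n}c_i x^{n-i}$ be an irreducible polynomial over $\mathrm{GF}(2)$ with $f(x)\neq x$. Let $B$ be the binary matrix with $2^n-1$ rows and columns indexed by $j=0,1,2,\ldots$, whose rows are indexed by the nonzero initial states $s=(a_{-n},\ldots,a_{-1})\in\mathrm{GF}(2)^n\setminus\{0\}$, the row indexed by $s$ being the sequence $a_0,a_1,a_2,\ldots$ determined by $a_k=\sum_{i=1}^{n}c_i a_{k-i}$ (mod $2$) from the initial state $s$. Let $R$ be a set of $n$ distinct nonnegative integers and define the set polynomial $$g_R(x)=\prod_{\emptyset\neq Q\subseteq R}\ \sum_{r\in Q}x^{r}\in\mathrm{GF}(2)[x].$$ Then the submatrix of $B$ formed by the $n$ columns indexed by $R$ contains every nonzero binary $n$-tuple as a row if and only if $f(x)$ does not divide $g_R(x)$.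
   Context: Equivalently, the rows of $B$ are all cyclic shifts of all nonzero sequences satisfying the linear recurrence associated with $f(x)$. *)

theory Defs
  imports "HOL-Library.Z2" "HOL-Computational_Algebra.Polynomial"
begin

text \<open>For a monic polynomial f of degree n over GF(2),
  write f = x^n + sum_{i=1..n} c_i x^(n-i), so c_i = coeff f (n - i).
  The full sequence with initial state is indexed from 0:
  lfsr f s m = a_(m-n); for m < n this is the initial state entry s m
  (s m = a_(m-n)), and for m >= n the recurrence a_k = sum c_i a_(k-i) holds.
  Hence column j of the matrix B is lfsr f s (j + n).\<close>

function lfsr :: "bit poly \<Rightarrow> (nat \<Rightarrow> bit) \<Rightarrow> nat \<Rightarrow> bit" where
  "lfsr f s m =
     (if m < degree f then s m
      else (\<Sum>i\<in>{1..degree f}. coeff f (degree f - i) * lfsr f s (m - i)))"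
  by auto
termination
  by (relation "measure (\<lambda>(f, s, m). m)") auto

definition set_poly :: "nat set \<Rightarrow> bit poly" where
  "set_poly R = (\<Prod>Q\<in>{Q. Q \<subseteq> R \<and> Q \<noteq> {}}. \<Sum>r\<in>Q. monom 1 r)"

end

theory Submission imports Defs "HOL-Computational_Algebra.Computational_Algebra" begin
definition recf :: "bit poly \<Rightarrow> (nat \<Rightarrow> bit) \<Rightarrow> bool" where
  "recf f b \<longleftrightarrow> (\<forall>m\<ge>degree f. b m = (\<Sum>i\<in>{1..degree f}. coeff f (degree f - i) * b (m - i)))"

definition Lf :: "(nat \<Rightarrow> bit) \<Rightarrow> bit poly \<Rightarrow> bit" where
  "Lf b h = (\<Sum>j\<le>degree h. coeff h j * b j)"

definition pQ :: "nat set \<Rightarrow> bit poly" where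
  "pQ Q = (\<Sum>r\<in>Q. monom 1 r)"

definition funs :: "nat set \<Rightarrow> (nat \<Rightarrow> bit) set" where
  "funs A = {t. \<forall>k. k \<notin> A \<longrightarrow> t k = 0}"

declare add_bit_eq_xor[simp del] mult_bit_eq_and[simp del]

lemma bit_add_self [simp]: "(x::bit) + x = 0" by simp
lemma bit_add_eq0: assumes "(x::bit) + y = 0" shows "x = y"
proof -
  have "x = x + (y + y)" by simp
  also have "\<dots> = (x + y) + y" by (simp only: add.assoc)
  finally show ?thesis using assms by simp
qed
lemma bitpoly_add_self [simp]: "(p::bit poly) + p = 0"
  by (rule poly_eqI) (simp only: coeff_add bit_add_self coeff_0)
lemma bitpoly_minus [simp]: "- (p::bit poly) = p"
proof -
  have "- p = - p + (p + p)" by (simp only: bitpoly_add_self add_0_right)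
  also have "\<dots> = p" by (simp only: add.assoc[symmetric] left_minus add_0_left)
  finally show ?thesis .
qed
lemma bitpoly_diff: "(p::bit poly) - q = p + q"
  by (simp only: diff_conv_add_uminus bitpoly_minus)
lemma L_eq: "degree h < N \<Longrightarrow> Lf b h = (\<Sum>j<N. coeff h j * b j)"
proof -
  assume "degree h < N"
  then have "{..degree h} \<subseteq> {..<N}" by auto
  then show ?thesis unfolding Lf_def
    by (intro sum.mono_neutral_left) (auto simp: coeff_eq_0)
qed

lemma L_add: "Lf b (p + q) = Lf b p + Lf b q"
proof -
  define N where "N = Suc (max (degree p) (degree q))"
  have "degree (p + q) < N" unfolding N_def
    by (metis degree_add_le le_imp_less_Suc max.cobounded1 max.cobounded2)
  then show ?thesis using L_eq[of p N b] L_eq[of q N b] L_eq[of "p+q" N b]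
    by (simp add: N_def sum.distrib distrib_right)
qed

lemma L_smult: "Lf b (smult a h) = a * Lf b h"
proof -
  have "degree (smult a h) < Suc (degree h)" by (simp add: le_imp_less_Suc)
  then have "Lf b (smult a h) = (\<Sum>j<Suc (degree h). coeff (smult a h) j * b j)" by (rule L_eq)
  also have "\<dots> = a * (\<Sum>j<Suc (degree h). coeff h j * b j)"
    by (simp only: sum_distrib_left coeff_smult mult.assoc)
  also have "\<dots> = a * Lf b h" by (subst L_eq[of h "Suc (degree h)"]) simp_all
  finally show ?thesis .
qed

lemma L_zero [simp]: "Lf b 0 = 0" by (simp add: Lf_def)

lemma L_sum: "finite A \<Longrightarrow> Lf b (\<Sum>x\<in>A. g x) = (\<Sum>x\<in>A. Lf b (g x))"
  by (induction A rule: finite_induct) (simp_all add: L_add)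

lemma L_monom: "Lf b (monom 1 r) = b r"
proof -
  have "Lf b (monom 1 r) = (\<Sum>j<Suc r. coeff (monom 1 r) j * b j)"
    by (rule L_eq) (simp add: degree_monom_eq)
  also have "\<dots> = (\<Sum>j<Suc r. if j = r then b j else 0)"
    by (rule sum.cong) (auto simp: coeff_monom)
  also have "\<dots> = b r" by (simp add: sum.delta')
  finally show ?thesis .
qed

lemma L_pCons0: "Lf b (pCons 0 h) = Lf (\<lambda>j. b (Suc j)) h"
proof -
  have d: "degree (pCons 0 h) < Suc (Suc (degree h))"
    by (metis degree_pCons_le le_imp_less_Suc)
  have "Lf b (pCons 0 h) = (\<Sum>j<Suc (Suc (degree h)). coeff (pCons 0 h) j * b j)"
    using L_eq[OF d] .
  also have "\<dots> = (\<Sum>j<Suc (degree h). coeff h j * b (Suc j))"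
    by (subst sum.lessThan_Suc_shift) simp
  also have "\<dots> = Lf (\<lambda>j. b (Suc j)) h" by (rule L_eq[symmetric]) simp
  finally show ?thesis .
qed

lemma recf_shift: "recf f b \<Longrightarrow> recf f (\<lambda>j. b (Suc j))"
  unfolding recf_def
proof (intro allI impI)
  fix m assume H: "\<forall>m\<ge>degree f. b m = (\<Sum>i = 1..degree f. coeff f (degree f - i) * b (m - i))"
    and m: "degree f \<le> m"
  have "b (Suc m) = (\<Sum>i = 1..degree f. coeff f (degree f - i) * b (Suc m - i))" using H m by simp
  also have "\<dots> = (\<Sum>i = 1..degree f. coeff f (degree f - i) * b (Suc (m - i)))"
    by (rule sum.cong) (use m in \<open>auto simp: Suc_diff_le\<close>)
  finally show "b (Suc m) = (\<Sum>i = 1..degree f. coeff f (degree f - i) * b (Suc (m - i)))" .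
qed

lemma L_f:
  assumes "recf f b" "lead_coeff f = 1" "degree f \<ge> 1"
  shows "Lf b f = 0"
proof -
  define n where "n = degree f"
  define S where "S = (\<Sum>j<n. coeff f j * b j)"
  have "Lf b f = (\<Sum>j<Suc n. coeff f j * b j)" unfolding Lf_def n_def
    by (simp add: lessThan_Suc_atMost)
  also have "\<dots> = S + b n" using assms(2) by (simp add: S_def n_def)
  also have "b n = (\<Sum>i\<in>{1..n}. coeff f (n - i) * b (n - i))"
    using assms(1) unfolding recf_def n_def by simp
  also have "\<dots> = S"
  proof -
    have "(\<Sum>i\<in>{1..n}. coeff f (n - i) * b (n - i)) = (\<Sum>i<n. coeff f (n - Suc i) * b (n - Suc i))"
    proof -
      have "{1..n} = Suc ` {..<n}" by (simp add: image_Suc_lessThan)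
      then show ?thesis by (simp add: sum.reindex)
    qed
    also have "\<dots> = S" unfolding S_def by (rule sum.nat_diff_reindex)
    finally show ?thesis .
  qed
  finally show ?thesis by simp
qed

lemma L_fmult:
  assumes "recf f b" "lead_coeff f = 1" "degree f \<ge> 1"
  shows "Lf b (f * q) = 0"
  using assms(1)
proof (induction q arbitrary: b)
  case 0 then show ?case by simp
next
  case (pCons a q)
  have "Lf b (f * pCons a q) = a * Lf b f + Lf (\<lambda>j. b (Suc j)) (f * q)"
    by (simp add: L_add L_smult L_pCons0)
  also have "\<dots> = 0" using L_f[OF pCons.prems assms(2,3)] pCons.IH[OF recf_shift[OF pCons.prems]] by simp
  finally show ?case .
qed


declare lfsr.simps[simp del]

lemma lfsr_init: "k < degree f \<Longrightarrow> lfsr f s k = s k"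
  by (subst lfsr.simps) simp

lemma lfsr_step: "degree f \<le> m \<Longrightarrow>
    lfsr f s m = (\<Sum>i\<in>{1..degree f}. coeff f (degree f - i) * lfsr f s (m - i))"
  by (subst lfsr.simps) simp

lemma lfsr_rec: "recf f (lfsr f s)"
  unfolding recf_def using lfsr_step by blast

lemma lfsr_add: "lfsr f (\<lambda>k. s1 k + s2 k) m = lfsr f s1 m + lfsr f s2 m"
proof (induction m rule: less_induct)
  case (less m)
  show ?case
  proof (cases "m < degree f")
    case True then show ?thesis by (simp add: lfsr_init)
  next
    case False
    then have "lfsr f (\<lambda>k. s1 k + s2 k) m =
      (\<Sum>i\<in>{1..degree f}. coeff f (degree f - i) * lfsr f (\<lambda>k. s1 k + s2 k) (m - i))"
      by (simp add: lfsr_step)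
    also have "\<dots> = (\<Sum>i\<in>{1..degree f}. coeff f (degree f - i) * lfsr f s1 (m - i)
                  + coeff f (degree f - i) * lfsr f s2 (m - i))"
      by (rule sum.cong) (use False in \<open>auto simp: less distrib_left\<close>)
    also have "\<dots> = lfsr f s1 m + lfsr f s2 m"
      using False by (simp add: sum.distrib lfsr_step)
    finally show ?thesis .
  qed
qed

lemma lfsr_zero: "lfsr f (\<lambda>k. 0) m = 0"
proof -
  have "lfsr f (\<lambda>k. 0 + 0) m = lfsr f (\<lambda>k. 0) m + lfsr f (\<lambda>k. 0) m" by (rule lfsr_add)
  then show ?thesis by simp
qed

lemma funs_bij: "bij_betw (\<lambda>t. {k\<in>A. t k = 1}) (funs A) (Pow A)"
proof (rule bij_betw_byWitness[where f' = "\<lambda>S k. if k \<in> S then 1 else 0"])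
  show "\<forall>t\<in>funs A. (\<lambda>k. if k \<in> {k \<in> A. t k = 1} then 1 else 0) = t"
    by (auto simp: funs_def fun_eq_iff)
  show "\<forall>S\<in>Pow A. {k \<in> A. (if k \<in> S then 1 else 0) = (1::bit)} = S" by auto
  show "(\<lambda>t. {k \<in> A. t k = 1}) ` funs A \<subseteq> Pow A" by auto
  show "(\<lambda>S k. if k \<in> S then 1 else 0) ` Pow A \<subseteq> funs A" by (auto simp: funs_def)
qed

lemma funs_finite: "finite A \<Longrightarrow> finite (funs A)"
  using funs_bij[of A] bij_betw_finite by blast

lemma funs_card: "finite A \<Longrightarrow> card (funs A) = 2 ^ card A"
  using bij_betw_same_card[OF funs_bij[of A]] by (simp add: card_Pow)

lemma coeff_pQ: "finite S \<Longrightarrow> coeff (pQ S) j = (if j \<in> S then 1 else 0)"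
  unfolding pQ_def by (simp add: coeff_sum coeff_monom)

lemma deg_in_pQ:
  assumes "degree h < n"
  shows "h \<in> pQ ` Pow {0..<n}"
proof
  define S where "S = {k\<in>{0..<n}. coeff h k \<noteq> 0}"
  show "S \<in> Pow {0..<n}" by (auto simp: S_def)
  show "h = pQ S"
  proof (rule poly_eqI)
    fix j
    show "coeff h j = coeff (pQ S) j"
    proof (cases "j < n")
      case True then show ?thesis by (auto simp: coeff_pQ S_def)
    next
      case False
      then have "coeff h j = 0" using assms by (simp add: coeff_eq_0)
      then show ?thesis using False by (simp add: coeff_pQ S_def)
    qed
  qed
qed

lemma pQ_symdiff:
  assumes "finite A" "finite B"
  shows "pQ A + pQ B = pQ ((A - B) \<union> (B - A))"
proof -
  have e1: "A - A \<inter> B = A - B" "B - A \<inter> B = B - A" by blast+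
  have a: "pQ A = pQ (A - B) + pQ (A \<inter> B)" unfolding pQ_def
    using sum.subset_diff[of "A \<inter> B" A] assms e1 by simp
  have b: "pQ B = pQ (B - A) + pQ (A \<inter> B)" unfolding pQ_def
    using sum.subset_diff[of "A \<inter> B" B] assms e1 by simp
  have c: "pQ ((A - B) \<union> (B - A)) = pQ (A - B) + pQ (B - A)" unfolding pQ_def
    using assms by (intro sum.union_disjoint) auto
  have "pQ A + pQ B = pQ (A - B) + pQ (B - A) + (pQ (A \<inter> B) + pQ (A \<inter> B))"
    unfolding a b by (simp only: ac_simps)
  then show ?thesis using c by simp
qed

lemma L_pQ: "finite Q \<Longrightarrow> Lf b (monom 1 n * pQ Q) = (\<Sum>r\<in>Q. b (n + r))"
  unfolding pQ_def by (simp add: sum_distrib_left mult_monom L_sum L_monom)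



lemma irr_bezout:
  fixes f h :: "bit poly"
  assumes irr: "irreducible f" and nd: "\<not> f dvd h"
  shows "\<exists>u v. u * h + v * f = 1"
proof -
  define I where "I = {u * h + v * f | u v. True}"
  have fI: "f \<in> I" unfolding I_def by (rule CollectI, rule exI[of _ 0], rule exI[of _ 1]) simp
  have f0: "f \<noteq> 0" using irr by auto
  obtain d where d: "d \<in> I \<and> d \<noteq> 0" and dmin: "\<forall>y. y \<in> I \<and> y \<noteq> 0 \<longrightarrow> degree d \<le> degree y"
    using ex_has_least_nat[of "\<lambda>y. y \<in> I \<and> y \<noteq> 0" f degree] fI f0 by blast
  obtain ud vd where dd: "d = ud * h + vd * f" using d unfolding I_def by blast
  have dvdI: "d dvd x" if xI: "x \<in> I" for x
  proof (rule ccontr)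
    assume nd: "\<not> d dvd x"
    then have m0: "x mod d \<noteq> 0" by (simp add: dvd_eq_mod_eq_0)
    obtain ux vx where xx: "x = ux * h + vx * f" using xI unfolding I_def by blast
    have "x mod d = x - (x div d) * d" by (simp add: minus_div_mult_eq_mod)
    also have "\<dots> = (ux - (x div d) * ud) * h + (vx - (x div d) * vd) * f"
      unfolding xx dd by (simp add: algebra_simps)
    finally have "x mod d \<in> I" unfolding I_def by blast
    then have "degree d \<le> degree (x mod d)" using dmin m0 by blast
    moreover have "degree (x mod d) < degree d" using degree_mod_less'[OF _ m0] d by blast
    ultimately show False by simp
  qed
  have hI: "h \<in> I" unfolding I_def by (rule CollectI, rule exI[of _ 1], rule exI[of _ 0]) simp
  from dvdI[OF fI] obtain e where fe: "f = d * e" by (elim dvdE)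
  from irreducibleD[OF irr fe] show ?thesis
  proof
    assume "d dvd 1"
    then obtain k where k: "1 = d * k" by (elim dvdE)
    then have "1 = (k * ud) * h + (k * vd) * f" unfolding dd by (simp add: algebra_simps)
    then show ?thesis by metis
  next
    assume "e dvd 1"
    then have "f dvd d" using fe by (metis dvd_mult_unit_iff dvd_refl)
    then have "f dvd h" using dvdI[OF hI] by (rule dvd_trans)
    then show ?thesis using nd by simp
  qed
qed

lemma irr_prime:
  fixes f a b :: "bit poly"
  assumes irr: "irreducible f" and "f dvd a * b"
  shows "f dvd a \<or> f dvd b"
proof (rule disjCI)
  assume "\<not> f dvd b"
  then obtain u v where uv: "u * b + v * f = 1" using irr_bezout[OF irr] by blast
  have "a = u * (a * b) + f * (v * a)" using uv by (metis mult_1_right distrib_left mult.commute mult.left_commute)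
  then show "f dvd a" using assms(2) by (metis dvd_add dvd_mult dvd_triv_left)
qed

lemma irr_dvd_prod:
  fixes f :: "bit poly"
  assumes irr: "irreducible f" and "finite A" and "f dvd (\<Prod>x\<in>A. g x)"
  shows "\<exists>x\<in>A. f dvd g x"
  using assms(2,3)
proof (induction A rule: finite_induct)
  case empty then show ?case using irr by (simp add: irreducible_not_unit)
next
  case (insert x A)
  then have "f dvd g x * (\<Prod>x\<in>A. g x)" by simp
  then show ?case using irr_prime[OF irr] insert by blast
qed

lemma f_bezout:
  fixes f :: "bit poly"
  assumes "degree f = n" "n \<ge> 1" "lead_coeff f = 1" "irreducible f" "f \<noteq> [:0, 1:]"
  shows "\<exists>u v. u * monom 1 n + v * f = 1"
proof -
  have nx: "\<not> f dvd [:0, 1:]"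
  proof
    assume "f dvd [:0, 1:]"
    then obtain q where q: "[:0, 1:] = f * q" by (elim dvdE)
    have "q \<noteq> 0" "f \<noteq> 0" using q by auto
    then have "degree [:0, 1::bit:] = degree f + degree q" using q degree_mult_eq by metis
    then have dq: "degree q = 0" using assms(1,2) by simp
    have "lead_coeff [:0, 1::bit:] = lead_coeff f * lead_coeff q" using q lead_coeff_mult by metis
    then have "lead_coeff q = 1" using assms(3) by simp
    then have "q = [:1:]" using dq degree_0_id[of q] by simp
    then have "q = 1" by (simp add: one_pCons)
    then show False using q assms(5) by simp
  qed
  have "\<not> f dvd [:0, 1:] ^ m" for m
  proof (induction m)
    case 0 then show ?case using assms(4) by (simp add: irreducible_not_unit)
  next
    case (Suc m)
    show ?case
    proof
      assume "f dvd [:0, 1:] ^ Suc m"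
      then have "f dvd [:0, 1:] * [:0, 1:] ^ m" by (simp only: power_Suc)
      then show False using irr_prime[OF assms(4)] nx Suc.IH by blast
    qed
  qed
  then have "\<not> f dvd monom 1 n" by (simp add: monom_altdef)
  then show ?thesis using irr_bezout[OF assms(4)] by blast
qed


lemma KER:
  fixes f u v :: "bit poly"
  assumes deg: "degree f = n" and n1: "n \<ge> 1" and lc: "lead_coeff f = 1"
    and fin: "finite R" and cR: "card R = n"
    and hyp: "\<forall>Q. Q \<subseteq> R \<longrightarrow> Q \<noteq> {} \<longrightarrow> \<not> f dvd pQ Q"
    and bez: "u * monom 1 n + v * f = 1"
    and rb: "recf f b" and z: "\<forall>r\<in>R. b (r + n) = 0"
  shows "\<forall>k<n. b k = 0"
proof -
  have f0: "f \<noteq> 0" using deg n1 by auto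
  define \<psi> where "\<psi> Q = pQ Q mod f" for Q
  have inj: "inj_on \<psi> (Pow R)"
  proof (rule inj_onI)
    fix Q1 Q2 assume Q1: "Q1 \<in> Pow R" and Q2: "Q2 \<in> Pow R" and e: "\<psi> Q1 = \<psi> Q2"
    have fQ: "finite Q1" "finite Q2" using Q1 Q2 fin finite_subset by auto
    have "f dvd pQ Q1 - pQ Q2" using e unfolding \<psi>_def by (simp add: mod_eq_dvd_iff)
    then have "f dvd pQ ((Q1 - Q2) \<union> (Q2 - Q1))" by (simp add: bitpoly_diff pQ_symdiff fQ)
    moreover have "(Q1 - Q2) \<union> (Q2 - Q1) \<subseteq> R" using Q1 Q2 by auto
    ultimately have "(Q1 - Q2) \<union> (Q2 - Q1) = {}" using hyp by blast
    then show "Q1 = Q2" by blast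
  qed
  define D where "D = pQ ` Pow {0..<n}"
  have degm: "degree (h mod f) < n" for h
    using degree_mod_less[OF f0, of h] deg n1 by auto
  have sub: "\<psi> ` Pow R \<subseteq> D" unfolding D_def \<psi>_def using degm deg_in_pQ by blast
  have finD: "finite D" unfolding D_def by simp
  have cD: "card D \<le> 2 ^ n" unfolding D_def
    using card_image_le[of "Pow {0..<n}" pQ] by (simp add: card_Pow)
  have cpsi: "card (\<psi> ` Pow R) = 2 ^ n" using card_image[OF inj] fin cR by (simp add: card_Pow)
  have eqD: "\<psi> ` Pow R = D" using card_seteq[OF finD sub] cD cpsi by simp
  have allh: "Lf b (monom 1 n * h) = 0" for h
  proof -
    have "h mod f \<in> D" unfolding D_def using degm deg_in_pQ by blast
    then obtain Q where Q: "Q \<subseteq> R" "h mod f = pQ Q mod f" using eqD unfolding \<psi>_def by auto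
    then have fQ: "finite Q" using fin finite_subset by auto
    have "f dvd h - pQ Q" using Q(2) by (simp add: mod_eq_dvd_iff)
    then obtain q where "h - pQ Q = f * q" by (elim dvdE)
    then have hq: "h = pQ Q + f * q" by (simp add: bitpoly_diff) (metis add.assoc add.commute add_0_right bitpoly_add_self)
    have "monom 1 n * h = monom 1 n * pQ Q + f * (monom 1 n * q)" unfolding hq by (simp add: algebra_simps)
    then have "Lf b (monom 1 n * h) = (\<Sum>r\<in>Q. b (n + r)) + Lf b (f * (monom 1 n * q))"
      by (simp add: L_add L_pQ fQ)
    also have "\<dots> = 0" using L_fmult[OF rb lc] deg n1 z Q(1) by (simp add: add.commute subset_iff)
    finally show ?thesis .
  qed
  show ?thesis
  proof (intro allI impI)
    fix k assume "k < n"
    have "b k = Lf b (monom 1 k * (u * monom 1 n + v * f))" by (simp add: bez L_monom)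
    also have "\<dots> = Lf b (monom 1 n * (monom 1 k * u)) + Lf b (f * (monom 1 k * v))"
      by (simp add: algebra_simps L_add)
    also have "\<dots> = 0" using allh L_fmult[OF rb lc] deg n1 by simp
    finally show "b k = 0" .
  qed
qed


lemma set_poly_pQ: "set_poly R = (\<Prod>Q\<in>{Q. Q \<subseteq> R \<and> Q \<noteq> {}}. pQ Q)"
  unfolding set_poly_def pQ_def by simp

theorem theorem6:
  fixes f :: "bit poly" and n :: nat and R :: "nat set"
  assumes "n \<ge> 1"
    and "degree f = n" and "lead_coeff f = 1"
    and "irreducible f"
    and "f \<noteq> [:0, 1:]"
    and "finite R" and "card R = n"
  shows "(\<forall>t :: nat \<Rightarrow> bit. (\<exists>r\<in>R. t r \<noteq> 0) \<longrightarrow>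
            (\<exists>s :: nat \<Rightarrow> bit. (\<exists>k<n. s k \<noteq> 0) \<and> (\<forall>r\<in>R. lfsr f s (r + n) = t r)))
         \<longleftrightarrow> \<not> f dvd set_poly R"
proof
  assume P: "\<forall>t :: nat \<Rightarrow> bit. (\<exists>r\<in>R. t r \<noteq> 0) \<longrightarrow>
            (\<exists>s :: nat \<Rightarrow> bit. (\<exists>k<n. s k \<noteq> 0) \<and> (\<forall>r\<in>R. lfsr f s (r + n) = t r))"
  show "\<not> f dvd set_poly R"
  proof
    assume "f dvd set_poly R"
    then obtain Q where Q: "Q \<subseteq> R" "Q \<noteq> {}" "f dvd pQ Q"
      using irr_dvd_prod[OF assms(4), of "{Q. Q \<subseteq> R \<and> Q \<noteq> {}}" pQ] assms(6)
      unfolding set_poly_pQ by auto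
    have fQ: "finite Q" using Q(1) assms(6) finite_subset by auto
    obtain r0 where r0: "r0 \<in> Q" using Q(2) by blast
    define t where "t = (\<lambda>k. if k = r0 then 1 else (0::bit))"
    have "\<exists>r\<in>R. t r \<noteq> 0" using r0 Q(1) unfolding t_def by (intro bexI[of _ r0]) auto
    then obtain s where s: "\<forall>r\<in>R. lfsr f s (r + n) = t r" using P by blast
    obtain q where q: "pQ Q = f * q" using Q(3) by (elim dvdE)
    have "Lf (lfsr f s) (monom 1 n * pQ Q) = (\<Sum>r\<in>Q. lfsr f s (n + r))" by (rule L_pQ[OF fQ])
    also have "\<dots> = (\<Sum>r\<in>Q. t r)" using s Q(1) by (intro sum.cong) (auto simp: add.commute)
    also have "\<dots> = 1" unfolding t_def using r0 fQ by (simp add: sum.delta)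
    finally have "Lf (lfsr f s) (f * (monom 1 n * q)) = 1" unfolding q by (simp add: ac_simps)
    moreover have "Lf (lfsr f s) (f * (monom 1 n * q)) = 0"
      using L_fmult[OF lfsr_rec assms(3)] assms(1,2) by simp
    ultimately show False by simp
  qed
next
  assume nd: "\<not> f dvd set_poly R"
  have hyp: "\<forall>Q. Q \<subseteq> R \<longrightarrow> Q \<noteq> {} \<longrightarrow> \<not> f dvd pQ Q"
  proof (intro allI impI notI)
    fix Q assume "Q \<subseteq> R" "Q \<noteq> {}" "f dvd pQ Q"
    moreover have "pQ Q dvd set_poly R" unfolding set_poly_pQ
      by (rule dvd_prodI) (use assms(6) \<open>Q \<subseteq> R\<close> \<open>Q \<noteq> {}\<close> in auto)
    ultimately show False using nd dvd_trans by blast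
  qed
  obtain u v where bez: "u * monom 1 n + v * f = 1" using f_bezout[OF assms(2,1,3,4,5)] by blast
  define \<Phi> where "\<Phi> s = (\<lambda>r. if r \<in> R then lfsr f s (r + n) else 0)" for s
  have inj: "inj_on \<Phi> (funs {0..<n})"
  proof (rule inj_onI)
    fix s1 s2 assume s1: "s1 \<in> funs {0..<n}" and s2: "s2 \<in> funs {0..<n}" and e: "\<Phi> s1 = \<Phi> s2"
    define s where "s = (\<lambda>k. s1 k + s2 k)"
    have "\<forall>r\<in>R. lfsr f s (r + n) = 0"
    proof
      fix r assume "r \<in> R"
      have "\<Phi> s1 r = \<Phi> s2 r" using e by simp
      then have "lfsr f s1 (r + n) = lfsr f s2 (r + n)" using \<open>r \<in> R\<close> unfolding \<Phi>_def by simp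
      then show "lfsr f s (r + n) = 0" unfolding s_def lfsr_add by simp
    qed
    then have "\<forall>k<n. lfsr f s k = 0"
      using KER[OF assms(2,1,3,6,7) hyp bez lfsr_rec[of f s]] by blast
    then have sk: "s k = 0" if "k < n" for k using that assms(2) by (simp add: lfsr_init)
    show "s1 = s2"
    proof (rule ext)
      fix k show "s1 k = s2 k"
      proof (cases "k < n")
        case True then show ?thesis using sk[OF True] bit_add_eq0 unfolding s_def by blast
      next
        case False then show ?thesis using s1 s2 unfolding funs_def by simp
      qed
    qed
  qed
  have sub: "\<Phi> ` funs {0..<n} \<subseteq> funs R"
  proof
    fix x assume "x \<in> \<Phi> ` funs {0..<n}"
    then obtain s where "x = \<Phi> s" by blast
    then show "x \<in> funs R" by (simp add: funs_def \<Phi>_def)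
  qed
  have "card (\<Phi> ` funs {0..<n}) = card (funs {0..<n})" by (rule card_image[OF inj])
  also have "\<dots> = 2 ^ n" using funs_card[of "{0..<n}"] by simp
  finally have cc: "card (\<Phi> ` funs {0..<n}) = 2 ^ n" .
  have eq: "\<Phi> ` funs {0..<n} = funs R"
    by (rule card_seteq[OF funs_finite[OF assms(6)] sub]) (simp add: funs_card[OF assms(6)] assms(7) cc)
  show "\<forall>t :: nat \<Rightarrow> bit. (\<exists>r\<in>R. t r \<noteq> 0) \<longrightarrow>
            (\<exists>s :: nat \<Rightarrow> bit. (\<exists>k<n. s k \<noteq> 0) \<and> (\<forall>r\<in>R. lfsr f s (r + n) = t r))"
  proof (intro allI impI)
    fix t :: "nat \<Rightarrow> bit" assume tnz: "\<exists>r\<in>R. t r \<noteq> 0"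
    define t' where "t' = (\<lambda>k. if k \<in> R then t k else 0)"
    have "t' \<in> funs R" unfolding funs_def t'_def by simp
    then obtain s where s: "s \<in> funs {0..<n}" "\<Phi> s = t'" using eq by (metis imageE)
    have vals: "\<forall>r\<in>R. lfsr f s (r + n) = t r"
    proof
      fix r assume "r \<in> R"
      have "\<Phi> s r = t' r" using s(2) by simp
      then show "lfsr f s (r + n) = t r" using \<open>r \<in> R\<close> unfolding \<Phi>_def t'_def by simp
    qed
    have "\<exists>k<n. s k \<noteq> 0"
    proof (rule ccontr)
      assume "\<not> (\<exists>k<n. s k \<noteq> 0)"
      then have "s k = 0" for k using s(1) unfolding funs_def by (cases "k < n") auto
      then have "s = (\<lambda>k. 0)" by (rule ext)
      then have z: "lfsr f s m = 0" for m by (simp add: lfsr_zero)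
      from tnz obtain r where "r \<in> R" "t r \<noteq> 0" by blast
      then show False using vals z by metis
    qed
    then show "\<exists>s :: nat \<Rightarrow> bit. (\<exists>k<n. s k \<noteq> 0) \<and> (\<forall>r\<in>R. lfsr f s (r + n) = t r)"
      using vals by blast
  qed
qed

end
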